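(* For every base $b\ge 2$ there exist infinitely many positive integers that are not $b$-wARH numbers.
   Context: Fix a base $b\ge 2$. $s_b(N)$ is the sum of the base-$b$ digits of $N$. For a positive integer $X$, its reversal $X^R$ is the integer whose base-$b$ representation is that of $X$ written in reverse order (leading zeros of the result are dropped). A positive integer $N$ is a $b$-wARH number if there exists an integer $A\ge 0$ such that $N=(A+s_b(N))+(A+s_b(N))^R$. *)

theory Defs
  imports Main
begin

fun digits :: "nat \<Rightarrow> nat \<Rightarrow> nat list" where
  "digits b n = (if b < 2 \<or> n = 0 then [] else n mod b # digits b (n div b))"

fun from_digits :: "nat \<Rightarrow> nat list \<Rightarrow> nat" where
  "from_digits b [] = 0"
| "from_digits b (d # ds) = d + b * from_digits b ds"

definition digit_sum :: "nat \<Rightarrow> nat \<Rightarrow> nat" where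
  "digit_sum b n = sum_list (digits b n)"

(* reversal: read the base-b representation backwards; leading zeros vanish automatically *)
definition reversal :: "nat \<Rightarrow> nat \<Rightarrow> nat" where
  "reversal b n = from_digits b (rev (digits b n))"

definition wARH :: "nat \<Rightarrow> nat \<Rightarrow> bool" where
  "wARH b N \<longleftrightarrow> N > 0 \<and>
     (\<exists>A::nat. N = (A + digit_sum b N) + reversal b (A + digit_sum b N))"

end

theory Submission
  imports Defs
begin

declare digits.simps[simp del]

lemma fd_append: "from_digits b (xs @ ys) = from_digits b xs + b ^ length xs * from_digits b ys"
  by (induction xs) (auto simp: algebra_simps)

lemma fd_digits: "b \<ge> 2 \<Longrightarrow> from_digits b (digits b n) = n"
proof (induction b n rule: digits.induct)
  case (1 b n) then show ?case by (subst digits.simps) auto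
qed

lemma digits_lt: "d \<in> set (digits b n) \<Longrightarrow> d < b"
proof (induction b n rule: digits.induct)
  case (1 b n) then show ?case
    by (subst (asm) digits.simps) (auto split: if_splits)
qed

lemma digits_nil: "b \<ge> 2 \<Longrightarrow> digits b n = [] \<longleftrightarrow> n = 0"
  by (subst digits.simps) auto

lemma digits_last: "b \<ge> 2 \<Longrightarrow> digits b n \<noteq> [] \<Longrightarrow> last (digits b n) \<noteq> 0"
proof (induction b n rule: digits.induct)
  case (1 b n)
  show ?case
  proof (cases "n div b = 0")
    case True
    then have "n < b" using 1 by (simp add: div_eq_0_iff)
    moreover have "n \<noteq> 0" using 1 by (subst (asm) digits.simps) (auto split: if_splits)
    ultimately show ?thesis using 1 True by (subst digits.simps) simp
  next
    case False
    then have ne: "digits b (n div b) \<noteq> []" using 1 digits_nil by auto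
    have "n \<noteq> 0" using 1 by (subst (asm) digits.simps) (auto split: if_splits)
    then have "last (digits b n) = last (digits b (n div b))" using 1 ne
      by (subst digits.simps) simp
    then show ?thesis using 1 ne \<open>n \<noteq> 0\<close> by simp
  qed
qed

lemma fd_lt: "b \<ge> 1 \<Longrightarrow> \<forall>d\<in>set ds. d < b \<Longrightarrow> from_digits b ds < b ^ length ds"
proof (induction ds)
  case Nil then show ?case by simp
next
  case (Cons d ds)
  then have "from_digits b ds + 1 \<le> b ^ length ds" by simp
  then have "b * (from_digits b ds + 1) \<le> b * b ^ length ds" by (rule mult_le_mono2)
  then show ?case using Cons by (simp add: algebra_simps)
qed

lemma fd_ge_hd: "from_digits b (d # ds) \<ge> d" by simp

lemma fd_mod: "d < b \<Longrightarrow> from_digits b (d # ds) mod b = d" by simp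

lemma key:
  assumes b: "b \<ge> 2" and k: "k \<ge> 2"
  shows "X + reversal b X \<noteq> b ^ k"
proof
  assume eq: "X + reversal b X = b ^ k"
  define ds where "ds = digits b X"
  have X0: "X \<noteq> 0"
  proof
    assume "X = 0"
    then have "ds = []" using b ds_def digits_nil by auto
    then show False using eq \<open>X = 0\<close> unfolding reversal_def ds_def[symmetric] using b by simp
  qed
  have ne: "ds \<noteq> []" using X0 b ds_def digits_nil by auto
  define n where "n = length ds"
  define L where "L = last ds"
  define d0 where "d0 = hd ds"
  have lt: "\<forall>d\<in>set ds. d < b" using digits_lt ds_def by auto
  have L0: "L \<noteq> 0" using digits_last b ne ds_def L_def by auto
  have Lb: "L < b" using lt ne L_def by auto
  have d0b: "d0 < b" using lt ne d0_def by auto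
  have n1: "n \<ge> 1" using ne n_def by (cases ds) auto
  have Xds: "from_digits b ds = X" using fd_digits b ds_def by auto
  have XL: "X = from_digits b (butlast ds) + b ^ (n - 1) * L"
    using fd_append[of b "butlast ds" "[L]"] Xds ne L_def n_def by (simp add: append_butlast_last_id)
  have Xlt: "X < b ^ n" using fd_lt[of b ds] lt b Xds n_def by auto
  define R where "R = reversal b X"
  have Rds: "R = from_digits b (rev ds)" unfolding R_def reversal_def ds_def ..
  have Rlt: "R < b ^ n" using fd_lt[of b "rev ds"] lt b Rds n_def by auto
  obtain t where dst: "ds = d0 # t" using ne d0_def by (cases ds) auto
  have Rd0: "R = from_digits b (rev t) + b ^ (n - 1) * d0"
    using fd_append[of b "rev t" "[d0]"] Rds dst n_def by simp
  have revL: "rev ds = L # rev (butlast ds)"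
  proof -
    have "rev ds = rev (butlast ds @ [last ds])" using ne by simp
    then show ?thesis using L_def by simp
  qed
  have RmodL: "R mod b = L" using Rds revL Lb by simp
  have Xmod: "X mod b = d0" using fd_mod[OF d0b, of t] Xds dst by metis
  have Rpos: "R \<ge> 1" using RmodL L0 by (cases R) auto
  have bn: "b ^ (n - 1) * b = b ^ n" using n1 by (cases n) (auto simp: mult.commute)
  consider "n < k" | "n > k" | "n = k" by linarith
  then show False
  proof cases
    case 1
    have "b ^ n * 2 \<le> b ^ n * b" using b by simp
    also have "\<dots> = b ^ (Suc n)" by simp
    also have "\<dots> \<le> b ^ k" using 1 b by (intro power_increasing) auto
    finally show False using eq Xlt Rlt R_def by linarith
  next
    case 2
    have "b ^ k \<le> b ^ (n - 1)" using 2 b by (intro power_increasing) auto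
    also have "\<dots> \<le> b ^ (n - 1) * L" using L0 by simp
    also have "\<dots> \<le> X" using XL by linarith
    finally show False using eq Rpos R_def by linarith
  next
    case 3
    have "b dvd b ^ k" using k by (simp add: dvd_power)
    then have "(X + R) mod b = 0" using eq R_def by simp
    then have s: "(d0 + L) mod b = 0" using Xmod RmodL by (metis mod_add_eq)
    show False
    proof (cases "d0 = 0")
      case True
      then show False using s Lb L0 by simp
    next
      case False
      have "d0 + L < 2 * b" using d0b Lb by simp
      moreover have "d0 + L > 0" using L0 by simp
      moreover obtain q where q: "d0 + L = b * q" using s by (auto simp: mod_eq_0_iff_dvd elim: dvdE)
      ultimately have "q < 2" "q > 0" by (auto simp: mult.commute)
      then have "q = 1" by linarith
      then have dl: "d0 + L = b" using q by simp
      obtain t' where bt: "butlast ds = d0 # t'" using dst 3 k n_def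
        by (cases t) auto
      have "from_digits b (butlast ds) \<ge> d0" using bt by simp
      then have "X + R \<ge> d0 + b ^ (n - 1) * L + b ^ (n - 1) * d0" using XL Rd0 by linarith
      moreover have "b ^ (n - 1) * L + b ^ (n - 1) * d0 = b ^ n" using dl bn
        by (metis add.commute distrib_left)
      moreover have "X + R = b ^ n" using eq R_def 3 by simp
      ultimately show False using False by linarith
    qed
  qed
qed

theorem proposition9:
  fixes b :: nat
  assumes "b \<ge> 2"
  shows "infinite {N::nat. N > 0 \<and> \<not> wARH b N}"
proof -
  have mem: "b ^ (m + 2) \<in> {N::nat. N > 0 \<and> \<not> wARH b N}" for m
  proof -
    have "\<And>X. X + reversal b X \<noteq> b ^ (m + 2)" using key[OF assms, of "m+2"] by simp
    then have "\<not> wARH b (b ^ (m + 2))" unfolding wARH_def by (blast dest: sym)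
    moreover have "b ^ (m + 2) > 0" using assms by simp
    ultimately show ?thesis by simp
  qed
  have ge: "m \<le> b ^ (m + 2)" for m
  proof -
    have "m < 2 ^ m" by (rule less_exp)
    also have "\<dots> \<le> b ^ m" using assms by (simp add: power_mono)
    also have "\<dots> \<le> b ^ (m + 2)" using assms by (intro power_increasing) auto
    finally show ?thesis by simp
  qed
  show ?thesis
  proof
    assume "finite {N::nat. N > 0 \<and> \<not> wARH b N}"
    then obtain M where "\<forall>x\<in>{N::nat. N > 0 \<and> \<not> wARH b N}. x \<le> M"
      by (auto simp: finite_nat_set_iff_bounded_le)
    then have "b ^ (M + 1 + 2) \<le> M" using mem by blast
    moreover have "M + 1 \<le> b ^ (M + 1 + 2)" by (rule ge)
    ultimately show False by linarith
  qed
qed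

end
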